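(* For $1\le n\le\infty$, the category of (left) $\mathcal C_n$-modules in the symmetric monoidal category of vertical bicomplexes is isomorphic to the category $\mathrm{Ch}_n$ of $n$-multicomplexes: a module $(M,d_0^M,\lambda)$ corresponds to the $n$-multicomplex $(M,d_0^M,d_1^M,d_2^M,\dots)$ with $d_i^M(m)=\lambda(d_i\otimes m)$ for $i\ge1$, and module morphisms correspond to morphisms of $n$-multicomplexes.
   Context: $R$ is a commutative unital ring. For $1\le n\le\infty$, an $n$-multicomplex is a $\mathbb Z\times\mathbb Z$-bigraded $R$-module $A$ with $R$-linear maps $d_i$ ($i\ge0$) of bidegree $(-i,1-i)$ such that $\sum_{i+j=l}(-1)^id_id_j=0$ for all $l\ge0$ and $d_i=0$ for $i\ge n$; morphisms are bidegree $(0,0)$ maps commuting with all $d_i$; the category is $\mathrm{Ch}_n$. A vertical bicomplex is a $1$-multicomplex (only $d_0$, with $d_0^2=0$); vertical bicomplexes form a symmetric monoidal category under $(A\otimes B,d_0\otimes1+1\otimes d_0)$ with Koszul signs for the pairing $\langle(x_1,x_2),(y_1,y_2)\rangle=x_1y_1+x_2y_2$. A monoid there ("dg algebra") is a bigraded unital associative algebra with a square-zero derivation of bidegree $(0,1)$; a module over it is a vertical bicomplex $M$ with an action $\lambda$ compatible with differentials. $\mathcal C_\infty=R\langle d_1,d_2,\dots\rangle$ is the free bigraded associative unital $R$-algebra on generators $d_i$ ($i\ge1$) of bidegree $(-i,1-i)$. For $k\ge1$ let $S_k=\sum_{i+j=k,\ i,j\ge1}(-1)^{i+1}d_id_j$ (so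 $S_1=0$). $\delta_0$ is the unique derivation of bidegree $(0,1)$ with $\delta_0(d_i)=S_i$, satisfying $\delta_0(xy)=\delta_0(x)y+(-1)^{x_2}x\delta_0(y)$ for $x$ of bidegree $(x_1,x_2)$. For $n\ge1$, $I_n$ is the two-sided ideal generated by $S_k$ and $d_k$ for all $k\ge n$, $I_\infty=0$, and $\mathcal C_n=(\mathcal C_\infty/I_n,\delta_0)$. *)

theory Defs
  imports Main "HOL-Library.Extended_Nat"
begin

text \<open>A bigraded R-module is a family of sub-R-modules A p q of an ambient
R-module (type 'm with scalar action scale).\<close>

definition bigraded_module ::
  "('r::comm_ring_1 \<Rightarrow> 'm::ab_group_add \<Rightarrow> 'm) \<Rightarrow> (int \<Rightarrow> int \<Rightarrow> 'm set) \<Rightarrow> bool" where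
  "bigraded_module scale A \<longleftrightarrow> module scale \<and>
     (\<forall>p q. 0 \<in> A p q \<and> (\<forall>x\<in>A p q. \<forall>y\<in>A p q. x + y \<in> A p q)
            \<and> (\<forall>r. \<forall>x\<in>A p q. scale r x \<in> A p q))"

definition lin_map ::
  "('r::comm_ring_1 \<Rightarrow> 'm::ab_group_add \<Rightarrow> 'm) \<Rightarrow> ('r \<Rightarrow> 'n::ab_group_add \<Rightarrow> 'n)
   \<Rightarrow> 'm set \<Rightarrow> 'n set \<Rightarrow> ('m \<Rightarrow> 'n) \<Rightarrow> bool" where
  "lin_map scale scale' S T f \<longleftrightarrow>
     (\<forall>x\<in>S. f x \<in> T) \<and> (\<forall>x\<in>S. \<forall>y\<in>S. f (x + y) = f x + f y)
     \<and> (\<forall>r. \<forall>x\<in>S. f (scale r x) = scale' r (f x))"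

text \<open>d i p q is the component of d_i on A p q, of bidegree (-i, 1-i).
n :: enat, with \<infinity> allowed.\<close>

definition multicomplex ::
  "enat \<Rightarrow> ('r::comm_ring_1 \<Rightarrow> 'm::ab_group_add \<Rightarrow> 'm) \<Rightarrow> (int \<Rightarrow> int \<Rightarrow> 'm set)
   \<Rightarrow> (nat \<Rightarrow> int \<Rightarrow> int \<Rightarrow> 'm \<Rightarrow> 'm) \<Rightarrow> bool" where
  "multicomplex n scale A d \<longleftrightarrow> bigraded_module scale A \<and>
     (\<forall>i p q. lin_map scale scale (A p q) (A (p - int i) (q + 1 - int i)) (d i p q)) \<and>
     (\<forall>l p q. \<forall>m\<in>A p q.
        (\<Sum>j\<le>l. scale ((-1) ^ (l - j))
            (d (l - j) (p - int j) (q + 1 - int j) (d j p q m))) = 0) \<and>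
     (\<forall>i p q. enat i \<ge> n \<longrightarrow> (\<forall>m\<in>A p q. d i p q m = 0))"

definition multicomplex_morphism ::
  "('r::comm_ring_1 \<Rightarrow> 'm::ab_group_add \<Rightarrow> 'm) \<Rightarrow> ('r \<Rightarrow> 'n::ab_group_add \<Rightarrow> 'n)
   \<Rightarrow> (int \<Rightarrow> int \<Rightarrow> 'm set) \<Rightarrow> (int \<Rightarrow> int \<Rightarrow> 'n set)
   \<Rightarrow> (nat \<Rightarrow> int \<Rightarrow> int \<Rightarrow> 'm \<Rightarrow> 'm) \<Rightarrow> (nat \<Rightarrow> int \<Rightarrow> int \<Rightarrow> 'n \<Rightarrow> 'n)
   \<Rightarrow> (int \<Rightarrow> int \<Rightarrow> 'm \<Rightarrow> 'n) \<Rightarrow> bool" where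
  "multicomplex_morphism scale scale' A B d e f \<longleftrightarrow>
     (\<forall>p q. lin_map scale scale' (A p q) (B p q) (f p q)) \<and>
     (\<forall>i p q. \<forall>m\<in>A p q. f (p - int i) (q + 1 - int i) (d i p q m) = e i p q (f p q m))"

definition vbicomplex ::
  "('r::comm_ring_1 \<Rightarrow> 'm::ab_group_add \<Rightarrow> 'm) \<Rightarrow> (int \<Rightarrow> int \<Rightarrow> 'm set)
   \<Rightarrow> (int \<Rightarrow> int \<Rightarrow> 'm \<Rightarrow> 'm) \<Rightarrow> bool" where
  "vbicomplex scale A d0 \<longleftrightarrow> bigraded_module scale A \<and>
     (\<forall>p q. lin_map scale scale (A p q) (A p (q + 1)) (d0 p q)) \<and>
     (\<forall>p q. \<forall>m\<in>A p q. d0 p (q + 1) (d0 p q m) = 0)"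

text \<open>An element is a finitely supported R-valued function on words
(lists of letters i \<ge> 1, the letter i standing for the generator d_i).\<close>

type_synonym 'r fa = "nat list \<Rightarrow> 'r"

definition fa_elem :: "'r::comm_ring_1 fa \<Rightarrow> bool" where
  "fa_elem x \<longleftrightarrow> finite {w. x w \<noteq> 0} \<and> (\<forall>w. x w \<noteq> 0 \<longrightarrow> (\<forall>i\<in>set w. 1 \<le> i))"

definition fa_mult :: "'r::comm_ring_1 fa \<Rightarrow> 'r fa \<Rightarrow> 'r fa" where
  "fa_mult x y = (\<lambda>w. \<Sum>k\<le>length w. x (take k w) * y (drop k w))"

definition fa_one :: "'r::comm_ring_1 fa" where
  "fa_one = (\<lambda>w. if w = [] then 1 else 0)"

definition word :: "nat list \<Rightarrow> 'r::comm_ring_1 fa" where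
  "word u = (\<lambda>w. if w = u then 1 else 0)"

definition gen :: "nat \<Rightarrow> 'r::comm_ring_1 fa" where
  "gen i = word [i]"

text \<open>Bidegree of a word: d_i has bidegree (-i, 1-i).\<close>
definition wdeg :: "nat list \<Rightarrow> int \<times> int" where
  "wdeg w = (- int (sum_list w), int (length w) - int (sum_list w))"

definition homog :: "int \<times> int \<Rightarrow> 'r::comm_ring_1 fa \<Rightarrow> bool" where
  "homog ab x \<longleftrightarrow> fa_elem x \<and> (\<forall>w. x w \<noteq> 0 \<longrightarrow> wdeg w = ab)"

definition Sk :: "nat \<Rightarrow> 'r::comm_ring_1 fa" where
  "Sk k = (\<lambda>w. \<Sum>i\<in>{1..<k}. (-1) ^ (i + 1) * fa_mult (gen i) (gen (k - i)) w)"

text \<open>The derivation delta_0 with delta_0(d_i) = S_i and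
delta_0(xy) = delta_0(x) y + (-1)^(x_2) x delta_0(y), on words
(d_i has x_2 = 1 - i, so the sign is (-1)^(i+1)), extended linearly.\<close>
primrec delta_word :: "nat list \<Rightarrow> 'r::comm_ring_1 fa" where
  "delta_word [] = (\<lambda>_. 0)"
| "delta_word (i # w) = (\<lambda>v. fa_mult (Sk i) (word w) v
                              + (-1) ^ (i + 1) * fa_mult (gen i) (delta_word w) v)"

definition delta0 :: "'r::comm_ring_1 fa \<Rightarrow> 'r fa" where
  "delta0 x = (\<lambda>v. \<Sum>w\<in>{w. x w \<noteq> 0}. x w * delta_word w v)"

inductive_set In_ideal :: "enat \<Rightarrow> 'r::comm_ring_1 fa set" for n where
  zero: "(\<lambda>_. 0) \<in> In_ideal n"
| gen_d: "1 \<le> k \<Longrightarrow> n \<le> enat k \<Longrightarrow> gen k \<in> In_ideal n"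
| gen_S: "1 \<le> k \<Longrightarrow> n \<le> enat k \<Longrightarrow> Sk k \<in> In_ideal n"
| add: "x \<in> In_ideal n \<Longrightarrow> y \<in> In_ideal n \<Longrightarrow> (\<lambda>w. x w + y w) \<in> In_ideal n"
| mult_left: "x \<in> In_ideal n \<Longrightarrow> fa_elem a \<Longrightarrow> fa_mult a x \<in> In_ideal n"
| mult_right: "x \<in> In_ideal n \<Longrightarrow> fa_elem a \<Longrightarrow> fa_mult x a \<in> In_ideal n"

text \<open>A C_n-module structure on the vertical bicomplex (A, d0) is a bidegree
(0,0) map lambda : C_n \<otimes> M \<rightarrow> M. It is encoded as lam p q c m for c a
homogeneous element of C_infinity and m \<in> A p q, i.e. as a C_infinity action
vanishing on I_n (= an action of the quotient C_n = C_infinity / I_n).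
Compatibility with differentials uses the Koszul sign (-1)^b for c of
bidegree (a,b).\<close>

definition Cn_module ::
  "enat \<Rightarrow> ('r::comm_ring_1 \<Rightarrow> 'm::ab_group_add \<Rightarrow> 'm) \<Rightarrow> (int \<Rightarrow> int \<Rightarrow> 'm set)
   \<Rightarrow> (int \<Rightarrow> int \<Rightarrow> 'm \<Rightarrow> 'm) \<Rightarrow> (int \<Rightarrow> int \<Rightarrow> 'r fa \<Rightarrow> 'm \<Rightarrow> 'm) \<Rightarrow> bool" where
  "Cn_module n scale A d0 lam \<longleftrightarrow> vbicomplex scale A d0 \<and>
     (\<forall>a b p q c. homog (a, b) c \<longrightarrow>
        lin_map scale scale (A p q) (A (p + a) (q + b)) (lam p q c)) \<and>
     (\<forall>a b p q c c'. homog (a, b) c \<longrightarrow> homog (a, b) c' \<longrightarrow>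
        (\<forall>m\<in>A p q. lam p q (\<lambda>w. c w + c' w) m = lam p q c m + lam p q c' m)) \<and>
     (\<forall>a b p q c r. homog (a, b) c \<longrightarrow>
        (\<forall>m\<in>A p q. lam p q (\<lambda>w. r * c w) m = scale r (lam p q c m))) \<and>
     (\<forall>p q. \<forall>m\<in>A p q. lam p q fa_one m = m) \<and>
     (\<forall>a b a' b' p q c c'. homog (a, b) c \<longrightarrow> homog (a', b') c' \<longrightarrow>
        (\<forall>m\<in>A p q. lam p q (fa_mult c c') m = lam (p + a') (q + b') c (lam p q c' m))) \<and>
     (\<forall>a b p q c. homog (a, b) c \<longrightarrow> c \<in> In_ideal n \<longrightarrow>
        (\<forall>m\<in>A p q. lam p q c m = 0)) \<and>
     (\<forall>a b p q c. homog (a, b) c \<longrightarrow>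
        (\<forall>m\<in>A p q. d0 (p + a) (q + b) (lam p q c m)
           = lam p q (delta0 c) m
             + scale (if even b then 1 else -1) (lam p (q + 1) c (d0 p q m))))"

definition Cn_module_morphism ::
  "('r::comm_ring_1 \<Rightarrow> 'm::ab_group_add \<Rightarrow> 'm) \<Rightarrow> ('r \<Rightarrow> 'n::ab_group_add \<Rightarrow> 'n)
   \<Rightarrow> (int \<Rightarrow> int \<Rightarrow> 'm set) \<Rightarrow> (int \<Rightarrow> int \<Rightarrow> 'n set)
   \<Rightarrow> (int \<Rightarrow> int \<Rightarrow> 'm \<Rightarrow> 'm) \<Rightarrow> (int \<Rightarrow> int \<Rightarrow> 'n \<Rightarrow> 'n)
   \<Rightarrow> (int \<Rightarrow> int \<Rightarrow> 'r fa \<Rightarrow> 'm \<Rightarrow> 'm) \<Rightarrow> (int \<Rightarrow> int \<Rightarrow> 'r fa \<Rightarrow> 'n \<Rightarrow> 'n)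
   \<Rightarrow> (int \<Rightarrow> int \<Rightarrow> 'm \<Rightarrow> 'n) \<Rightarrow> bool" where
  "Cn_module_morphism scale scale' A B d0 e0 lam mu f \<longleftrightarrow>
     (\<forall>p q. lin_map scale scale' (A p q) (B p q) (f p q)) \<and>
     (\<forall>p q. \<forall>m\<in>A p q. f p (q + 1) (d0 p q m) = e0 p q (f p q m)) \<and>
     (\<forall>a b p q c. homog (a, b) c \<longrightarrow>
        (\<forall>m\<in>A p q. f (p + a) (q + b) (lam p q c m) = mu p q c (f p q m)))"

definition assoc_d ::
  "(int \<Rightarrow> int \<Rightarrow> 'm \<Rightarrow> 'm) \<Rightarrow> (int \<Rightarrow> int \<Rightarrow> 'r::comm_ring_1 fa \<Rightarrow> 'm \<Rightarrow> 'm)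
   \<Rightarrow> nat \<Rightarrow> int \<Rightarrow> int \<Rightarrow> 'm \<Rightarrow> 'm" where
  "assoc_d d0 lam i = (if i = 0 then d0 else (\<lambda>p q. lam p q (gen i)))"

end

theory Submission
  imports Defs
begin

definition supp :: "'r::comm_ring_1 fa \<Rightarrow> nat list set" where
  "supp c = {w. c w \<noteq> 0}"

primrec act :: "(nat \<Rightarrow> int \<Rightarrow> int \<Rightarrow> 'm \<Rightarrow> 'm) \<Rightarrow> nat list \<Rightarrow> int \<Rightarrow> int \<Rightarrow> 'm \<Rightarrow> 'm" where
  "act d [] p q m = m"
| "act d (i # w) p q m = d i (p + fst (wdeg w)) (q + snd (wdeg w)) (act d w p q m)"

definition Tm :: "('r::comm_ring_1 \<Rightarrow> 'm::ab_group_add \<Rightarrow> 'm) \<Rightarrow> (nat \<Rightarrow> int \<Rightarrow> int \<Rightarrow> 'm \<Rightarrow> 'm)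
   \<Rightarrow> 'r fa \<Rightarrow> int \<Rightarrow> int \<Rightarrow> 'm \<Rightarrow> 'm" where
  "Tm scale d c p q m = (\<Sum>w\<in>{w. c w \<noteq> 0}. scale (c w) (act d w p q m))"

lemma wdeg_nil[simp]: "wdeg [] = (0,0)" by (simp add: wdeg_def)
lemma wdeg_cons: "wdeg (i # w) = (fst (wdeg w) - int i, snd (wdeg w) + 1 - int i)"
  by (simp add: wdeg_def)
lemma wdeg_append: "wdeg (u @ v) = (fst (wdeg u) + fst (wdeg v), snd (wdeg u) + snd (wdeg v))"
  by (simp add: wdeg_def)

lemma act_append: "act d (u @ v) p q m = act d u (p + fst (wdeg v)) (q + snd (wdeg v)) (act d v p q m)"
  by (induction u) (simp_all add: wdeg_append algebra_simps)

lemma word_apply: "word u w = (if w = u then 1 else 0)" by (simp add: word_def)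

lemma fa_mult_expand:
  assumes "finite (supp x)" "finite (supp y)"
  shows "fa_mult x y w = (\<Sum>uv\<in>supp x \<times> supp y. x (fst uv) * y (snd uv) * word (fst uv @ snd uv) w)"
proof -
  let ?S = "{uv \<in> supp x \<times> supp y. fst uv @ snd uv = w}"
  have fin: "finite (supp x \<times> supp y)" using assms by simp
  have "(\<Sum>uv\<in>supp x \<times> supp y. x (fst uv) * y (snd uv) * word (fst uv @ snd uv) w)
      = (\<Sum>uv\<in>?S. x (fst uv) * y (snd uv))"
    using fin by (simp add: word_apply sum.inter_filter[symmetric] if_distrib eq_commute[of w] cong: if_cong)
  also have "\<dots> = (\<Sum>k\<in>(\<lambda>uv. length (fst uv)) ` ?S. x (take k w) * y (drop k w))"
  proof (subst sum.reindex)
    show "inj_on (\<lambda>uv. length (fst uv)) ?S"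
      by (auto simp: inj_on_def)
  qed (auto intro!: sum.cong)
  also have "\<dots> = (\<Sum>k\<le>length w. x (take k w) * y (drop k w))"
  proof (rule sum.mono_neutral_left)
    show "(\<lambda>uv. length (fst uv)) ` ?S \<subseteq> {..length w}" by auto
    show "\<forall>i\<in>{..length w} - (\<lambda>uv. length (fst uv)) ` ?S. x (take i w) * y (drop i w) = 0"
    proof
      fix k assume k: "k \<in> {..length w} - (\<lambda>uv. length (fst uv)) ` ?S"
      show "x (take k w) * y (drop k w) = 0"
      proof (rule ccontr)
        assume "x (take k w) * y (drop k w) \<noteq> 0"
        then have "(take k w, drop k w) \<in> ?S" by (auto simp: supp_def)
        moreover have "length (take k w) = k" using k by auto
        ultimately show False using k by (metis (no_types, lifting) DiffD2 fst_conv image_eqI)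
      qed
    qed
  qed simp
  finally show ?thesis by (simp add: fa_mult_def)
qed

lemma supp_word: "supp (word u) = {u}" by (auto simp: supp_def word_apply)

lemma finite_supp_smul: "finite (supp c) \<Longrightarrow> finite (supp (\<lambda>w. k * c w))"
  by (rule finite_subset[of _ "supp c"]) (auto simp: supp_def)
lemma finite_supp_word[simp]: "finite (supp (word u))" by (simp add: supp_word)
lemma finite_supp_zero[simp]: "finite (supp (\<lambda>w. 0))" by (simp add: supp_def)
lemma finite_supp_smul_word[simp]: "finite (supp (\<lambda>w. k * word u w))"
  by (simp add: finite_supp_smul)

lemma finite_supp_fa_mult:
  assumes "finite (supp x)" "finite (supp y)"
  shows "finite (supp (fa_mult x y))"
proof (rule finite_subset)
  show "supp (fa_mult x y) \<subseteq> (\<lambda>uv. fst uv @ snd uv) ` (supp x \<times> supp y)"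
  proof
    fix w assume "w \<in> supp (fa_mult x y)"
    then have "(\<Sum>uv\<in>supp x \<times> supp y. x (fst uv) * y (snd uv) * word (fst uv @ snd uv) w) \<noteq> 0"
      using fa_mult_expand[OF assms] by (simp add: supp_def)
    then obtain uv where "uv \<in> supp x \<times> supp y" "word (fst uv @ snd uv) w \<noteq> (0::'a)"
      by (metis (no_types, lifting) mult_zero_right sum.neutral)
    then show "w \<in> (\<lambda>uv. fst uv @ snd uv) ` (supp x \<times> supp y)"
      by (auto simp: word_apply split: if_splits)
  qed
qed (use assms in simp)

lemma supp_fa_mult_sub:
  assumes "finite (supp x)" "finite (supp y)"
  shows "supp (fa_mult x y) \<subseteq> (\<lambda>uv. fst uv @ snd uv) ` (supp x \<times> supp y)"
proof
  fix w assume "w \<in> supp (fa_mult x y)"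
  then have "(\<Sum>uv\<in>supp x \<times> supp y. x (fst uv) * y (snd uv) * word (fst uv @ snd uv) w) \<noteq> 0"
    using fa_mult_expand[OF assms] by (simp add: supp_def)
  then obtain uv where "uv \<in> supp x \<times> supp y" "word (fst uv @ snd uv) w \<noteq> (0::'a)"
    by (metis (no_types, lifting) mult_zero_right sum.neutral)
  then show "w \<in> (\<lambda>uv. fst uv @ snd uv) ` (supp x \<times> supp y)"
    by (auto simp: word_apply split: if_splits)
qed

lemma supp_gen: "supp (gen i) = {[i]}" by (simp add: gen_def supp_word)

lemma fa_mult_word_word: "fa_mult (word u) (word v) = word (u @ v)"
  by (rule ext) (simp add: fa_mult_expand supp_word word_apply)

lemma word_cons: "word (i # w) = fa_mult (gen i) (word w)"
  by (simp add: gen_def fa_mult_word_word)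

lemma fa_one_word: "fa_one = word []" by (rule ext) (simp add: fa_one_def word_apply)

lemma fa_mult_zero_right: "fa_mult x (\<lambda>_. 0) = (\<lambda>_. 0)"
  by (simp add: fa_mult_def)

lemma fa_mult_one_right: "fa_mult x fa_one = x"
proof
  fix w
  have "fa_mult x fa_one w = (\<Sum>k\<le>length w. if k = length w then x w else 0)"
    unfolding fa_mult_def fa_one_def by (rule sum.cong) auto
  then show "fa_mult x fa_one w = x w" by simp
qed

lemma Sk_eq: "Sk k = (\<lambda>w. \<Sum>i\<in>{1..<k}. (-1) ^ (i + 1) * word [i, k - i] w)"
  by (simp add: Sk_def gen_def fa_mult_word_word)

lemma finite_supp_sum:
  "finite I \<Longrightarrow> (\<And>i. i \<in> I \<Longrightarrow> finite (supp (f i))) \<Longrightarrow> finite (supp (\<lambda>w. \<Sum>i\<in>I. f i w))"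
  by (rule finite_subset[of _ "\<Union>i\<in>I. supp (f i)"]) (auto simp: supp_def intro: sum.neutral)

lemma supp_sum_sub: "supp (\<lambda>w. \<Sum>i\<in>I. f i w) \<subseteq> (\<Union>i\<in>I. supp (f i))"
  by (auto simp: supp_def intro: sum.neutral)

lemma finite_supp_Sk: "finite (supp (Sk k))"
  unfolding Sk_eq by (rule finite_supp_sum) (simp, rule finite_supp_smul_word)

lemma supp_Sk: "w \<in> supp (Sk k :: 'r::comm_ring_1 fa) \<Longrightarrow> wdeg w = (- int k, 2 - int k)"
proof -
  assume "w \<in> supp (Sk k :: 'r fa)"
  then have "w \<in> (\<Union>i\<in>{1..<k}. supp (\<lambda>w. (-1::'r) ^ (i + 1) * word [i, k - i] w))"
    unfolding Sk_eq by (rule subsetD[OF supp_sum_sub[of "\<lambda>i w. (-1::'r) ^ (i + 1) * word [i, k - i] w" "{1..<k}"]])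
  then obtain i where i: "i \<in> {1..<k}" "w \<in> supp (\<lambda>w. (-1::'r) ^ (i + 1) * word [i, k - i] w)"
    by (rule UN_E)
  then have "w = [i, k - i]" by (auto simp: supp_def word_apply split: if_splits)
  then show ?thesis using i by (simp add: wdeg_def of_nat_diff)
qed

lemma supp_add_sub: "supp (\<lambda>w. x w + y w) \<subseteq> supp x \<union> supp y"
  by (auto simp: supp_def)

lemma supp_smul_sub: "supp (\<lambda>w. r * x w) \<subseteq> supp x"
  by (auto simp: supp_def)

lemma finite_supp_add: "finite (supp x) \<Longrightarrow> finite (supp y) \<Longrightarrow> finite (supp (\<lambda>w. x w + y w))"
  by (rule finite_subset[OF supp_add_sub]) simp

lemma delta_word_props:
  "finite (supp (delta_word w :: 'r::comm_ring_1 fa)) \<and>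
   (\<forall>u\<in>supp (delta_word w :: 'r fa). wdeg u = (fst (wdeg w), snd (wdeg w) + 1))"
proof (induction w)
  case Nil
  then show ?case by (simp add: supp_def)
next
  case (Cons i w)
  let ?x = "fa_mult (Sk i) (word w) :: 'r fa"
  let ?y = "fa_mult (gen i) (delta_word w) :: 'r fa"
  have fg: "finite (supp (gen i :: 'r fa))" by (simp add: supp_gen)
  have f1: "finite (supp ?x)" by (simp add: finite_supp_fa_mult finite_supp_Sk)
  have f2: "finite (supp ?y)" using Cons by (simp add: finite_supp_fa_mult supp_gen)
  have f3: "finite (supp (\<lambda>v. (-1) ^ (i + 1) * ?y v))" using f2 by (rule finite_supp_smul)
  have eq: "delta_word (i # w) = (\<lambda>v. ?x v + (-1) ^ (i + 1) * ?y v)" by simp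
  have d1: "\<forall>u\<in>supp ?x. wdeg u = (fst (wdeg (i # w)), snd (wdeg (i # w)) + 1)"
  proof
    fix u assume "u \<in> supp ?x"
    then have "u \<in> (\<lambda>uv. fst uv @ snd uv) ` (supp (Sk i :: 'r fa) \<times> supp (word w :: 'r fa))"
      by (rule subsetD[OF supp_fa_mult_sub[OF finite_supp_Sk finite_supp_word]])
    then obtain a b where "a \<in> supp (Sk i :: 'r fa)" "b \<in> supp (word w :: 'r fa)" "u = a @ b"
      by auto
    moreover have "wdeg a = (- int i, 2 - int i)" by (rule supp_Sk) fact
    ultimately show "wdeg u = (fst (wdeg (i # w)), snd (wdeg (i # w)) + 1)"
      by (auto simp: wdeg_append wdeg_cons supp_word)
  qed
  have d2: "\<forall>u\<in>supp ?y. wdeg u = (fst (wdeg (i # w)), snd (wdeg (i # w)) + 1)"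
  proof
    fix u assume "u \<in> supp ?y"
    then have "u \<in> (\<lambda>uv. fst uv @ snd uv) ` (supp (gen i :: 'r fa) \<times> supp (delta_word w :: 'r fa))"
      by (rule subsetD[OF supp_fa_mult_sub[OF fg conjunct1[OF Cons]]])
    then obtain a b where "a \<in> supp (gen i :: 'r fa)" "b \<in> supp (delta_word w :: 'r fa)" "u = a @ b"
      by auto
    then show "wdeg u = (fst (wdeg (i # w)), snd (wdeg (i # w)) + 1)"
      using Cons by (auto simp: wdeg_append wdeg_cons supp_gen wdeg_def)
  qed
  show ?case
  proof
    show "finite (supp (delta_word (i # w) :: 'r fa))" unfolding eq by (rule finite_supp_add[OF f1 f3])
    show "\<forall>u\<in>supp (delta_word (i # w) :: 'r fa). wdeg u = (fst (wdeg (i # w)), snd (wdeg (i # w)) + 1)"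
      unfolding eq using d1 d2 supp_add_sub[of ?x "\<lambda>v. (-1) ^ (i + 1) * ?y v"] supp_smul_sub[of "(-1) ^ (i + 1)" ?y] by blast
  qed
qed

locale bg =
  fixes scale :: "'r::comm_ring_1 \<Rightarrow> 'm::ab_group_add \<Rightarrow> 'm"
    and A :: "int \<Rightarrow> int \<Rightarrow> 'm set"
  assumes bgm: "bigraded_module scale A"
begin

sublocale module scale using bgm by (simp add: bigraded_module_def)

lemma A_zero[simp]: "0 \<in> A p q" using bgm by (simp add: bigraded_module_def)
lemma A_add[intro]: "x \<in> A p q \<Longrightarrow> y \<in> A p q \<Longrightarrow> x + y \<in> A p q"
  using bgm by (simp add: bigraded_module_def)
lemma A_scale[intro]: "x \<in> A p q \<Longrightarrow> scale r x \<in> A p q"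
  using bgm by (simp add: bigraded_module_def)
lemma A_uminus[intro]: "x \<in> A p q \<Longrightarrow> - x \<in> A p q"
  using A_scale[of x p q "-1"] by simp
lemma A_diff[intro]: "x \<in> A p q \<Longrightarrow> y \<in> A p q \<Longrightarrow> x - y \<in> A p q"
  using A_add[of x p q "-y"] A_uminus[of y p q] by simp
lemma A_sum[intro]: "(\<And>i. i \<in> I \<Longrightarrow> g i \<in> A p q) \<Longrightarrow> sum g I \<in> A p q"
  by (induction I rule: infinite_finite_induct) auto


lemma lin_in: "lin_map scale sc S T f \<Longrightarrow> x \<in> S \<Longrightarrow> f x \<in> T"
  by (simp add: lin_map_def)
lemma lin_add: "lin_map scale sc S T f \<Longrightarrow> x \<in> S \<Longrightarrow> y \<in> S \<Longrightarrow> f (x + y) = f x + f y"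
  by (simp add: lin_map_def)
lemma lin_zero: "lin_map scale sc (A p q) T f \<Longrightarrow> f 0 = 0"
proof -
  assume l: "lin_map scale sc (A p q) T f"
  have "f (0 + 0) = f 0 + f 0" using lin_add[OF l A_zero A_zero] .
  then show ?thesis by simp
qed
lemma lin_scale: "lin_map scale sc S T f \<Longrightarrow> x \<in> S \<Longrightarrow> f (scale r x) = sc r (f x)"
  by (simp add: lin_map_def)
lemma lin_sum: "lin_map scale sc (A p q) T f \<Longrightarrow> (\<And>i. i \<in> I \<Longrightarrow> g i \<in> A p q)
   \<Longrightarrow> f (sum g I) = (\<Sum>i\<in>I. f (g i))"
proof (induction I rule: infinite_finite_induct)
  case (infinite I) then show ?case by (simp add: lin_zero)
next
  case empty then show ?case by (simp add: lin_zero)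
next
  case (insert i I)
  then show ?case by (simp add: lin_add A_sum)
qed
lemma lin_uminus: "lin_map scale scale (A p q) T f \<Longrightarrow> x \<in> A p q \<Longrightarrow> f (- x) = - f x"
  using lin_scale[of scale "A p q" T f x "-1"] by simp
lemma lin_diff: "lin_map scale scale (A p q) T f \<Longrightarrow> x \<in> A p q \<Longrightarrow> y \<in> A p q \<Longrightarrow> f (x - y) = f x - f y"
  using lin_add[of scale "A p q" T f x "-y"] lin_uminus[of p q T f y] by (simp add: A_uminus)

abbreviation T where "T \<equiv> Tm scale"

lemma T_superset:
  assumes "finite S" "supp c \<subseteq> S"
  shows "T d c p q m = (\<Sum>w\<in>S. scale (c w) (act d w p q m))"
  unfolding Tm_def
  by (rule sum.mono_neutral_left) (use assms in \<open>auto simp: supp_def\<close>)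

lemma T_sum:
  assumes "finite I" "\<And>i. i \<in> I \<Longrightarrow> finite (supp (f i))"
  shows "T d (\<lambda>w. \<Sum>i\<in>I. f i w) p q m = (\<Sum>i\<in>I. T d (f i) p q m)"
proof -
  let ?S = "\<Union>i\<in>I. supp (f i)"
  have fS: "finite ?S" using assms by auto
  have "supp (\<lambda>w. \<Sum>i\<in>I. f i w) \<subseteq> ?S"
    by (auto simp: supp_def) (meson sum.neutral)
  then have "T d (\<lambda>w. \<Sum>i\<in>I. f i w) p q m = (\<Sum>w\<in>?S. scale (\<Sum>i\<in>I. f i w) (act d w p q m))"
    using T_superset fS by blast
  also have "\<dots> = (\<Sum>w\<in>?S. \<Sum>i\<in>I. scale (f i w) (act d w p q m))"
    by (simp add: scale_sum_left)
  also have "\<dots> = (\<Sum>i\<in>I. \<Sum>w\<in>?S. scale (f i w) (act d w p q m))"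
    by (rule sum.swap)
  also have "\<dots> = (\<Sum>i\<in>I. T d (f i) p q m)"
    by (rule sum.cong[OF refl], rule T_superset[symmetric]) (use fS assms in auto)
  finally show ?thesis .
qed

lemma T_smul:
  assumes "finite (supp c)"
  shows "T d (\<lambda>w. r * c w) p q m = scale r (T d c p q m)"
proof -
  have "supp (\<lambda>w. r * c w) \<subseteq> supp c" by (auto simp: supp_def)
  then have "T d (\<lambda>w. r * c w) p q m = (\<Sum>w\<in>supp c. scale (r * c w) (act d w p q m))"
    using T_superset assms by blast
  also have "\<dots> = scale r (T d c p q m)"
    by (simp add: Tm_def scale_sum_right supp_def)
  finally show ?thesis .
qed

lemma T_add:
  assumes "finite (supp c)" "finite (supp c')"
  shows "T d (\<lambda>w. c w + c' w) p q m = T d c p q m + T d c' p q m"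
proof -
  have "T d (\<lambda>w. \<Sum>i\<in>{True, False}. (if i then c else c') w) p q m
     = (\<Sum>i\<in>{True, False}. T d (if i then c else c') p q m)"
    by (rule T_sum) (use assms in auto)
  then show ?thesis by simp
qed

lemma T_word: "T d (word u) p q m = act d u p q m"
  by (simp add: T_superset[of "{u}"] supp_word word_apply)

lemma T_zero: "T d (\<lambda>_. 0) p q m = 0"
  by (simp add: Tm_def)

lemma T_mult_gen:
  assumes fx: "finite (supp x)" and fy: "finite (supp y)"
  shows "T d (\<lambda>w. if P w then fa_mult x y w else 0) p q m
    = (\<Sum>uv\<in>supp x \<times> supp y. if P (fst uv @ snd uv)
         then scale (x (fst uv) * y (snd uv)) (act d (fst uv @ snd uv) p q m) else 0)"
proof -
  let ?f = "\<lambda>uv w. (if P (fst uv @ snd uv) then x (fst uv) * y (snd uv) else 0) * word (fst uv @ snd uv) w"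
  have eq: "(\<lambda>w. if P w then fa_mult x y w else 0) = (\<lambda>w. \<Sum>uv\<in>supp x \<times> supp y. ?f uv w)"
  proof
    fix w
    show "(if P w then fa_mult x y w else 0) = (\<Sum>uv\<in>supp x \<times> supp y. ?f uv w)"
      by (cases "P w") (auto simp: fa_mult_expand[OF fx fy] word_apply intro!: sum.cong sum.neutral)
  qed
  have "T d (\<lambda>w. \<Sum>uv\<in>supp x \<times> supp y. ?f uv w) p q m = (\<Sum>uv\<in>supp x \<times> supp y. T d (?f uv) p q m)"
    by (rule T_sum) (use fx fy in auto)
  also have "\<dots> = (\<Sum>uv\<in>supp x \<times> supp y. if P (fst uv @ snd uv)
         then scale (x (fst uv) * y (snd uv)) (act d (fst uv @ snd uv) p q m) else 0)"
    by (rule sum.cong[OF refl]) (simp add: T_smul supp_word T_word)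
  finally show ?thesis using eq by simp
qed


definition dlin where
  "dlin d \<longleftrightarrow> (\<forall>i p q. lin_map scale scale (A p q) (A (p - int i) (q + 1 - int i)) (d i p q))"

lemma lin_comp: "lin_map scale scale S U f \<Longrightarrow> lin_map scale scale U V g \<Longrightarrow> lin_map scale scale S V (\<lambda>x. g (f x))"
  by (simp add: lin_map_def)

lemma act_lin:
  assumes "dlin d"
  shows "lin_map scale scale (A p q) (A (p + fst (wdeg w)) (q + snd (wdeg w))) (act d w p q)"
proof (induction w)
  case Nil
  then show ?case by (simp add: lin_map_def)
next
  case (Cons i w)
  have "lin_map scale scale (A (p + fst (wdeg w)) (q + snd (wdeg w)))
     (A (p + fst (wdeg w) - int i) (q + snd (wdeg w) + 1 - int i)) (d i (p + fst (wdeg w)) (q + snd (wdeg w)))"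
    using assms by (simp add: dlin_def)
  then have "lin_map scale scale (A (p + fst (wdeg w)) (q + snd (wdeg w)))
     (A (p + fst (wdeg (i # w))) (q + snd (wdeg (i # w)))) (d i (p + fst (wdeg w)) (q + snd (wdeg w)))"
    by (simp add: wdeg_cons algebra_simps)
  from lin_comp[OF Cons this] show ?case by simp
qed

lemma act_in: "dlin d \<Longrightarrow> m \<in> A p q \<Longrightarrow> act d w p q m \<in> A (p + fst (wdeg w)) (q + snd (wdeg w))"
  using act_lin lin_in by blast

lemma T_in:
  assumes "dlin d" "m \<in> A p q" "\<And>w. w \<in> supp c \<Longrightarrow> wdeg w = (a, b)"
  shows "T d c p q m \<in> A (p + a) (q + b)"
  unfolding Tm_def
  by (rule A_sum, rule A_scale) (metis act_in assms fst_conv mem_Collect_eq snd_conv supp_def)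

lemma T_lin:
  assumes "dlin d" "\<And>w. w \<in> supp c \<Longrightarrow> wdeg w = (a, b)"
  shows "lin_map scale scale (A p q) (A (p + a) (q + b)) (T d c p q)"
proof -
  have l: "\<And>w. w \<in> supp c \<Longrightarrow> lin_map scale scale (A p q) (A (p + a) (q + b)) (act d w p q)"
    using act_lin[OF assms(1)] assms(2) by (metis fst_conv snd_conv)
  show ?thesis
    unfolding lin_map_def
  proof (intro conjI ballI allI)
    fix x assume "x \<in> A p q" then show "T d c p q x \<in> A (p + a) (q + b)" using T_in assms by blast
  next
    fix x y assume "x \<in> A p q" "y \<in> A p q"
    then show "T d c p (q) (x + y) = T d c p q x + T d c p q y"
      unfolding Tm_def sum.distrib[symmetric] using l
    proof (intro sum.cong[OF refl])
      fix w assume "w \<in> {w. c w \<noteq> 0}"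
      then have "act d w p q (x + y) = act d w p q x + act d w p q y"
        using lin_add[OF l[of w] \<open>x \<in> A p q\<close> \<open>y \<in> A p q\<close>] by (simp add: supp_def)
      then show "scale (c w) (act d w p q (x + y)) = scale (c w) (act d w p q x) + scale (c w) (act d w p q y)"
        by (simp add: scale_right_distrib)
    qed
  next
    fix r x assume "x \<in> A p q"
    then show "T d c p q (scale r x) = scale r (T d c p q x)"
      unfolding Tm_def scale_sum_right
    proof (intro sum.cong[OF refl])
      fix w assume "w \<in> {w. c w \<noteq> 0}"
      then have "act d w p q (scale r x) = scale r (act d w p q x)"
        using lin_scale[OF l[of w] \<open>x \<in> A p q\<close>] by (simp add: supp_def)
      then show "scale (c w) (act d w p q (scale r x)) = scale r (scale (c w) (act d w p q x))"
        by (simp add: mult.commute)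
    qed
  qed
qed

lemma T_mult:
  assumes dl: "dlin d" and fx: "finite (supp x)" and fy: "finite (supp y)"
    and hy: "\<And>v. v \<in> supp y \<Longrightarrow> wdeg v = (a, b)" and m: "m \<in> A p q"
  shows "T d (fa_mult x y) p q m = T d x (p + a) (q + b) (T d y p q m)"
proof -
  have "T d (fa_mult x y) p q m = (\<Sum>uv\<in>supp x \<times> supp y.
         scale (x (fst uv) * y (snd uv)) (act d (fst uv @ snd uv) p q m))"
    using T_mult_gen[OF fx fy, of d "\<lambda>_. True"] by simp
  also have "\<dots> = (\<Sum>u\<in>supp x. \<Sum>v\<in>supp y. scale (x u * y v) (act d (u @ v) p q m))"
    by (simp add: sum.cartesian_product case_prod_beta)
  also have "\<dots> = (\<Sum>u\<in>supp x. scale (x u) (act d u (p + a) (q + b) (T d y p q m)))"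
  proof (rule sum.cong[OF refl])
    fix u assume "u \<in> supp x"
    have l: "lin_map scale scale (A (p + a) (q + b)) (A (p + a + fst (wdeg u)) (q + b + snd (wdeg u))) (act d u (p + a) (q + b))"
      using act_lin[OF dl] .
    have inA: "\<And>v. v \<in> supp y \<Longrightarrow> scale (y v) (act d v p q m) \<in> A (p + a) (q + b)"
      using act_in[OF dl m] hy by (metis A_scale fst_conv snd_conv)
    have "act d u (p + a) (q + b) (T d y p q m) = (\<Sum>v\<in>supp y. act d u (p + a) (q + b) (scale (y v) (act d v p q m)))"
      unfolding Tm_def supp_def[symmetric] by (rule lin_sum[OF l inA])
    also have "\<dots> = (\<Sum>v\<in>supp y. scale (y v) (act d (u @ v) p q m))"
      by (rule sum.cong[OF refl]) (metis act_append act_in dl fst_conv hy lin_scale[OF l] m snd_conv)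
    finally show "(\<Sum>v\<in>supp y. scale (x u * y v) (act d (u @ v) p q m)) = scale (x u) (act d u (p + a) (q + b) (T d y p q m))"
      by (simp add: scale_sum_right)
  qed
  also have "\<dots> = T d x (p + a) (q + b) (T d y p q m)"
    by (simp add: Tm_def supp_def)
  finally show ?thesis .
qed


lemma T_Sk: "T d (Sk l) P Q x = (\<Sum>i\<in>{1..<l}. scale ((-1) ^ (i + 1)) (act d [i, l - i] P Q x))"
proof -
  have "T d (Sk l) P Q x = (\<Sum>i\<in>{1..<l}. T d (\<lambda>w. (-1) ^ (i + 1) * word [i, l - i] w) P Q x)"
    unfolding Sk_eq by (rule T_sum) (simp, rule finite_supp_smul_word)
  then show ?thesis by (simp only: T_smul finite_supp_word T_word)
qed

lemma rel_eq:
  assumes dl: "dlin d" and l: "1 \<le> l" and x: "x \<in> A P Q"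
  shows "(\<Sum>j\<le>l. scale ((-1) ^ (l - j)) (d (l - j) (P - int j) (Q + 1 - int j) (d j P Q x)))
    = d 0 (P - int l) (Q + 1 - int l) (d l P Q x) + scale ((-1) ^ l) (d l P (Q + 1) (d 0 P Q x))
      - T d (Sk l) P Q x"
proof -
  let ?g = "\<lambda>j. scale ((-1) ^ (l - j)) (d (l - j) (P - int j) (Q + 1 - int j) (d j P Q x))"
  have split: "{..l} = insert 0 (insert l {1..<l})" using l by auto
  have "(\<Sum>j\<le>l. ?g j) = ?g 0 + (?g l + (\<Sum>j\<in>{1..<l}. ?g j))"
    unfolding split using l by (simp add: sum.insert)
  also have "(\<Sum>j\<in>{1..<l}. ?g j) = (\<Sum>i\<in>{1..<l}. ?g (l - i))"
    by (subst sum.atLeastLessThan_rev) simp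
  also have "\<dots> = - T d (Sk l) P Q x"
    unfolding T_Sk sum_negf[symmetric]
  proof (rule sum.cong[OF refl])
    fix i assume i: "i \<in> {1..<l}"
    then have li: "l - (l - i) = i" by auto
    have "act d [i, l - i] P Q x = d i (P - int (l - i)) (Q + 1 - int (l - i)) (d (l - i) P Q x)"
      by (simp add: wdeg_def algebra_simps)
    then show "?g (l - i) = - scale ((-1) ^ (i + 1)) (act d [i, l - i] P Q x)"
      by (simp add: li)
  qed
  finally show ?thesis by (simp add: algebra_simps)
qed


lemma sg_step: "(if even (b + 1 - int i) then 1 else -1 :: 'r) = - ((-1) ^ i * (if even b then 1 else -1))"
proof (cases "even i")
  case True
  then have "even (b + 1 - int i) \<longleftrightarrow> odd b" by (auto simp: even_add)
  then show ?thesis using True by auto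
next
  case False
  then have "even (b + 1 - int i) \<longleftrightarrow> even b" by (auto simp: even_add)
  then show ?thesis using False by auto
qed

lemma mc_dlin: "multicomplex n scale A d \<Longrightarrow> dlin d"
  by (simp add: multicomplex_def dlin_def)

lemma mc_rel: "multicomplex n scale A d \<Longrightarrow> x \<in> A P Q \<Longrightarrow>
  (\<Sum>j\<le>l. scale ((-1) ^ (l - j)) (d (l - j) (P - int j) (Q + 1 - int j) (d j P Q x))) = 0"
  by (simp add: multicomplex_def)

lemma mc_d0_lin: "multicomplex n scale A d \<Longrightarrow> lin_map scale scale (A p q) (A p (q + 1)) (d 0 p q)"
  using mc_dlin[unfolded dlin_def] by (metis add_0_right diff_zero of_nat_0)

lemma dcomp_word:
  assumes mc: "multicomplex n scale A d" and m: "m \<in> A p q" and w: "\<forall>i\<in>set w. 1 \<le> i"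
  shows "d 0 (p + fst (wdeg w)) (q + snd (wdeg w)) (act d w p q m)
    = T d (delta_word w) p q m + scale (if even (snd (wdeg w)) then 1 else -1) (act d w p (q + 1) (d 0 p q m))"
  using w
proof (induction w)
  case Nil
  then show ?case by (simp add: T_zero)
next
  case (Cons i w)
  have dl: "dlin d" using mc by (rule mc_dlin)
  have i: "1 \<le> i" using Cons.prems by simp
  have dwp: "finite (supp (delta_word w :: 'r fa)) \<and>
   (\<forall>u\<in>supp (delta_word w :: 'r fa). wdeg u = (fst (wdeg w), snd (wdeg w) + 1))"
    by (rule delta_word_props)
  define P where "P = p + fst (wdeg w)"
  define Q where "Q = q + snd (wdeg w)"
  define x where "x = act d w p q m"
  define sg where "sg = (if even (snd (wdeg w)) then 1 else -1 :: 'r)"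
  have x: "x \<in> A P Q" unfolding x_def P_def Q_def using act_in[OF dl m] .
  have IH: "d 0 P Q x = T d (delta_word w) p q m + scale sg (act d w p (q + 1) (d 0 p q m))"
    using Cons.IH Cons.prems unfolding P_def Q_def x_def sg_def by simp
  have dm: "d 0 p q m \<in> A p (q + 1)" using lin_in[OF mc_d0_lin[OF mc] m] .
  have h1: "T d (delta_word w) p q m \<in> A P (Q + 1)"
  proof -
    have "T d (delta_word w) p q m \<in> A (p + fst (wdeg w)) (q + (snd (wdeg w) + 1))"
      by (rule T_in[OF dl m]) (use dwp in auto)
    then show ?thesis unfolding P_def Q_def by (simp add: algebra_simps)
  qed
  have h2: "act d w p (q + 1) (d 0 p q m) \<in> A P (Q + 1)"
    unfolding P_def Q_def using act_in[OF dl dm, of w] by (simp add: algebra_simps)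
  have li: "lin_map scale scale (A P (Q + 1)) (A (P - int i) (Q + 1 + 1 - int i)) (d i P (Q + 1))"
    using dl[unfolded dlin_def, rule_format, where i=i and p=P and q="Q + 1"] .
  have r: "d 0 (P - int i) (Q + 1 - int i) (d i P Q x) = T d (Sk i) P Q x - scale ((-1) ^ i) (d i P (Q + 1) (d 0 P Q x))"
    using rel_eq[OF dl i x] mc_rel[OF mc x, of i] by (simp add: algebra_simps)
  have e1: "d i P (Q + 1) (d 0 P Q x) = d i P (Q + 1) (T d (delta_word w) p q m) + scale sg (d i P (Q + 1) (act d w p (q + 1) (d 0 p q m)))"
    unfolding IH using lin_add[OF li h1 A_scale[OF h2]] lin_scale[OF li h2] by simp
  let ?X = "fa_mult (Sk i) (word w) :: 'r fa"
  let ?Y = "fa_mult (gen i) (delta_word w) :: 'r fa"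
  have fX: "finite (supp ?X)" by (simp add: finite_supp_fa_mult finite_supp_Sk)
  have fY: "finite (supp ?Y)" using dwp by (simp add: finite_supp_fa_mult supp_gen)
  have TX: "T d ?X p q m = T d (Sk i) P Q x"
    unfolding P_def Q_def x_def
    using T_mult[OF dl finite_supp_Sk finite_supp_word, of w "fst (wdeg w)" "snd (wdeg w)" m p q] m
    by (simp add: supp_word T_word)
  have TY: "T d ?Y p q m = d i P (Q + 1) (T d (delta_word w) p q m)"
  proof -
    have "T d ?Y p q m = T d (gen i) (p + fst (wdeg w)) (q + (snd (wdeg w) + 1)) (T d (delta_word w) p q m)"
      using T_mult[OF dl _ conjunct1[OF dwp], of "gen i" "fst (wdeg w)" "snd (wdeg w) + 1" m p q] m
        dwp by (simp add: supp_gen)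
    then show ?thesis unfolding P_def Q_def by (simp add: gen_def T_word algebra_simps)
  qed
  have Td: "T d (delta_word (i # w)) p q m = T d (Sk i) P Q x + scale ((-1) ^ (i + 1)) (d i P (Q + 1) (T d (delta_word w) p q m))"
  proof -
    have "T d (delta_word (i # w)) p q m = T d (\<lambda>v. ?X v + (-1) ^ (i + 1) * ?Y v) p q m" by simp
    also have "\<dots> = T d ?X p q m + T d (\<lambda>v. (-1) ^ (i + 1) * ?Y v) p q m"
      by (rule T_add[OF fX finite_supp_smul[OF fY]])
    also have "\<dots> = T d (Sk i) P Q x + scale ((-1) ^ (i + 1)) (d i P (Q + 1) (T d (delta_word w) p q m))"
      by (simp only: T_smul[OF fY] TX TY)
    finally show ?thesis .
  qed
  have lhs: "d 0 (p + fst (wdeg (i # w))) (q + snd (wdeg (i # w))) (act d (i # w) p q m)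
      = d 0 (P - int i) (Q + 1 - int i) (d i P Q x)"
    by (simp add: P_def Q_def x_def wdeg_cons algebra_simps)
  have act2: "act d (i # w) p (q + 1) (d 0 p q m) = d i P (Q + 1) (act d w p (q + 1) (d 0 p q m))"
    by (simp add: P_def Q_def algebra_simps)
  have sg2: "(if even (snd (wdeg (i # w))) then 1 else -1 :: 'r) = - ((-1) ^ i * sg)"
    unfolding sg_def wdeg_cons snd_conv by (rule sg_step)
  show ?case
    unfolding lhs act2 sg2 Td r e1
    by (simp add: scale_right_distrib algebra_simps)
qed


lemma T_proj_expand:
  assumes "finite (supp x)"
  shows "T d (\<lambda>w. if wdeg w = D then x w else 0) p q m
     = (\<Sum>v\<in>supp x. if wdeg v = D then scale (x v) (act d v p q m) else 0)"
  by (subst T_superset[OF assms]) (auto simp: supp_def intro!: sum.cong)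

lemma wdeg_app_iff1: "(wdeg (u @ v) = (a, b)) = (wdeg v = (a - fst (wdeg u), b - snd (wdeg u)))"
  by (auto simp: wdeg_append prod_eq_iff)
lemma wdeg_app_iff2: "(wdeg (u @ v) = (a, b)) = (wdeg u = (a - fst (wdeg v), b - snd (wdeg v)))"
  by (auto simp: wdeg_append prod_eq_iff)

lemma fa_elem_fin: "fa_elem c \<Longrightarrow> finite (supp c)"
  by (simp add: fa_elem_def supp_def)

lemma ideal_vanish:
  assumes mc: "multicomplex n scale A d"
  shows "c \<in> In_ideal n \<Longrightarrow> finite (supp c) \<and>
     (\<forall>a b p q. \<forall>m\<in>A p q. T d (\<lambda>w. if wdeg w = (a, b) then c w else 0) p q m = 0)"
proof (induction rule: In_ideal.induct)
  case zero
  then show ?case by (simp add: T_zero)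
next
  case (gen_d k)
  have gen_d_z: "d k p q m = 0" if "m \<in> A p q" for p q m
    using mc gen_d that by (simp add: multicomplex_def)
  moreover have eq: "(\<lambda>w. if wdeg w = (a, b) then gen k w else 0) = (if wdeg [k] = (a, b) then gen k else (\<lambda>_. 0))" for a b
    by (auto simp: gen_def word_apply)
  moreover have "T d (gen k) p q m = d k p q m" for p q m
    by (simp add: gen_def T_word)
  ultimately show ?case
  proof (intro conjI allI ballI)
    show "finite (supp (gen k :: 'r fa))" by (simp add: supp_gen)
  next
    fix a b p q m assume m: "m \<in> A p q"
    show "T d (\<lambda>w. if wdeg w = (a, b) then gen k w else 0) p q m = 0"
      unfolding eq using gen_d_z m by (cases "wdeg [k] = (a, b)") (simp_all add: T_zero gen_def T_word)
  qed
next
  case (gen_S k)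
  have dl: "dlin d" using mc by (rule mc_dlin)
  have TSk0: "T d (Sk k) p q m = 0" if m: "m \<in> A p q" for p q m
  proof -
    have z: "\<And>P Q y. y \<in> A P Q \<Longrightarrow> d k P Q y = 0"
      using mc gen_S by (simp add: multicomplex_def)
    have d0m: "d 0 p q m \<in> A p (q + 1)" using lin_in[OF mc_d0_lin[OF mc] m] .
    have "d 0 (p - int k) (q + 1 - int k) (d k p q m) = 0"
      using z[OF m] lin_zero[OF dl[unfolded dlin_def, rule_format, where i=0 and p="p - int k" and q="q + 1 - int k"]]
      by simp
    then show ?thesis using rel_eq[OF dl gen_S(1) m] mc_rel[OF mc m, of k] z[OF d0m] by simp
  qed
  moreover have eq2: "(\<lambda>w. if wdeg w = (a, b) then Sk k w else 0) = (if (a, b) = (- int k, 2 - int k) then Sk k else (\<lambda>_. 0))" for a b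
  proof (rule ext)
    fix w
    show "(if wdeg w = (a, b) then Sk k w else 0) = (if (a, b) = (- int k, 2 - int k) then Sk k else (\<lambda>_. 0)) w"
      using supp_Sk[of w k] by (auto simp: supp_def)
  qed
  ultimately show ?case
  proof (intro conjI allI ballI)
    show "finite (supp (Sk k :: 'r fa))" by (rule finite_supp_Sk)
  next
    fix a b p q m assume m: "m \<in> A p q"
    show "T d (\<lambda>w. if wdeg w = (a, b) then Sk k w else 0) p q m = 0"
      unfolding eq2 using TSk0 m by (cases "(a, b) = (- int k, 2 - int k)") (simp_all add: T_zero)
  qed
next
  case (add x y)
  have fx: "finite (supp (\<lambda>w. if wdeg w = (a, b) then x w else 0))" for a b
    by (rule finite_subset[of _ "supp x"]) (use add in \<open>auto simp: supp_def\<close>)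
  have fy: "finite (supp (\<lambda>w. if wdeg w = (a, b) then y w else 0))" for a b
    by (rule finite_subset[of _ "supp y"]) (use add in \<open>auto simp: supp_def\<close>)
  have eq: "(\<lambda>w. if wdeg w = (a, b) then x w + y w else 0) = (\<lambda>w. (if wdeg w = (a, b) then x w else 0) + (if wdeg w = (a, b) then y w else 0))" for a b
    by auto
  show ?case
    using add by (simp add: eq T_add[OF fx fy] finite_supp_add)
next
  case (mult_left x a)
  have fa: "finite (supp a)" using mult_left by (simp add: fa_elem_fin)
  have fx: "finite (supp x)" using mult_left by simp
  have "T d (\<lambda>w. if wdeg w = (a0, b0) then fa_mult a x w else 0) p q m = 0" if m: "m \<in> A p q" for a0 b0 p q m
  proof -
    have "T d (\<lambda>w. if wdeg w = (a0, b0) then fa_mult a x w else 0) p q m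
      = (\<Sum>u\<in>supp a. \<Sum>v\<in>supp x. if wdeg (u @ v) = (a0, b0) then scale (a u * x v) (act d (u @ v) p q m) else 0)"
      by (simp add: T_mult_gen[OF fa fx] sum.cartesian_product case_prod_beta)
    also have "\<dots> = (\<Sum>u\<in>supp a. 0)"
    proof (rule sum.cong[OF refl])
      fix u assume "u \<in> supp a"
      define a1 where "a1 = a0 - fst (wdeg u)"
      define b1 where "b1 = b0 - snd (wdeg u)"
      have l: "lin_map scale scale (A (p + a1) (q + b1)) (A (p + a1 + fst (wdeg u)) (q + b1 + snd (wdeg u))) (act d u (p + a1) (q + b1))"
        using act_lin[OF mc_dlin[OF mc]] .
      have h: "\<And>v. (if wdeg v = (a1, b1) then scale (x v) (act d v p q m) else 0) \<in> A (p + a1) (q + b1)"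
        using act_in[OF mc_dlin[OF mc] m] by (metis A_scale A_zero fst_conv snd_conv)
      have "(\<Sum>v\<in>supp x. if wdeg (u @ v) = (a0, b0) then scale (a u * x v) (act d (u @ v) p q m) else 0)
          = (\<Sum>v\<in>supp x. scale (a u) (act d u (p + a1) (q + b1) (if wdeg v = (a1, b1) then scale (x v) (act d v p q m) else 0)))"
      proof (rule sum.cong[OF refl])
        fix v
        show "(if wdeg (u @ v) = (a0, b0) then scale (a u * x v) (act d (u @ v) p q m) else 0)
          = scale (a u) (act d u (p + a1) (q + b1) (if wdeg v = (a1, b1) then scale (x v) (act d v p q m) else 0))"
        proof (cases "wdeg v = (a1, b1)")
          case True
          then have "wdeg (u @ v) = (a0, b0)" unfolding a1_def b1_def wdeg_app_iff1 .
          moreover have "act d u (p + a1) (q + b1) (scale (x v) (act d v p q m)) = scale (x v) (act d (u @ v) p q m)"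
            using lin_scale[OF l] act_in[OF mc_dlin[OF mc] m, of v] True by (simp add: act_append)
          ultimately show ?thesis using True by simp
        next
          case False
          then have "wdeg (u @ v) \<noteq> (a0, b0)" unfolding a1_def b1_def wdeg_app_iff1 .
          then show ?thesis using False lin_zero[OF l] by simp
        qed
      qed
      also have "\<dots> = scale (a u) (act d u (p + a1) (q + b1) (T d (\<lambda>w. if wdeg w = (a1, b1) then x w else 0) p q m))"
        by (simp add: T_proj_expand[OF fx] lin_sum[OF l h] scale_sum_right)
      also have "\<dots> = 0" using mult_left.IH m lin_zero[OF l] by simp
      finally show "(\<Sum>v\<in>supp x. if wdeg (u @ v) = (a0, b0) then scale (a u * x v) (act d (u @ v) p q m) else 0) = 0" .
    qed
    finally show ?thesis by simp
  qed
  then show ?case using finite_supp_fa_mult[OF fa fx] by blast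
next
  case (mult_right x a)
  have fa: "finite (supp a)" using mult_right by (simp add: fa_elem_fin)
  have fx: "finite (supp x)" using mult_right by simp
  have "T d (\<lambda>w. if wdeg w = (a0, b0) then fa_mult x a w else 0) p q m = 0" if m: "m \<in> A p q" for a0 b0 p q m
  proof -
    have "T d (\<lambda>w. if wdeg w = (a0, b0) then fa_mult x a w else 0) p q m
      = (\<Sum>u\<in>supp x. \<Sum>v\<in>supp a. if wdeg (u @ v) = (a0, b0) then scale (x u * a v) (act d (u @ v) p q m) else 0)"
      by (simp add: T_mult_gen[OF fx fa] sum.cartesian_product case_prod_beta)
    also have "\<dots> = (\<Sum>v\<in>supp a. \<Sum>u\<in>supp x. if wdeg (u @ v) = (a0, b0) then scale (x u * a v) (act d (u @ v) p q m) else 0)"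
      by (rule sum.swap)
    also have "\<dots> = (\<Sum>v\<in>supp a. 0)"
    proof (rule sum.cong[OF refl])
      fix v assume "v \<in> supp a"
      define a1 where "a1 = a0 - fst (wdeg v)"
      define b1 where "b1 = b0 - snd (wdeg v)"
      define m' where "m' = act d v p q m"
      have m': "m' \<in> A (p + fst (wdeg v)) (q + snd (wdeg v))" unfolding m'_def using act_in[OF mc_dlin[OF mc] m] .
      have "(\<Sum>u\<in>supp x. if wdeg (u @ v) = (a0, b0) then scale (x u * a v) (act d (u @ v) p q m) else 0)
          = scale (a v) (\<Sum>u\<in>supp x. if wdeg u = (a1, b1) then scale (x u) (act d u (p + fst (wdeg v)) (q + snd (wdeg v)) m') else 0)"
        unfolding scale_sum_right
        by (rule sum.cong[OF refl]) (simp add: a1_def b1_def m'_def wdeg_app_iff2 act_append mult.commute)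
      also have "\<dots> = 0"
        using mult_right.IH m' by (simp add: T_proj_expand[OF fx, symmetric])
      finally show "(\<Sum>u\<in>supp x. if wdeg (u @ v) = (a0, b0) then scale (x u * a v) (act d (u @ v) p q m) else 0) = 0" .
    qed
    finally show ?thesis by simp
  qed
  then show ?case using finite_supp_fa_mult[OF fx fa] by blast
qed


lemma homog_fin: "homog ab c \<Longrightarrow> finite (supp c)"
  by (simp add: homog_def fa_elem_fin)
lemma homog_deg: "homog ab c \<Longrightarrow> w \<in> supp c \<Longrightarrow> wdeg w = ab"
  by (simp add: homog_def supp_def)
lemma homog_letters: "homog ab c \<Longrightarrow> w \<in> supp c \<Longrightarrow> \<forall>i\<in>set w. 1 \<le> i"
  by (simp add: homog_def fa_elem_def supp_def)

lemma delta0_eq: "delta0 c = (\<lambda>v. \<Sum>w\<in>supp c. c w * delta_word w v)"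
  by (simp add: delta0_def supp_def)

lemma dcomp_T:
  assumes mc: "multicomplex n scale A d" and m: "m \<in> A p q" and c: "homog (a, b) c"
  shows "d 0 (p + a) (q + b) (T d c p q m)
    = T d (delta0 c) p q m + scale (if even b then 1 else -1) (T d c p (q + 1) (d 0 p q m))"
proof -
  have dl: "dlin d" using mc by (rule mc_dlin)
  have fc: "finite (supp c)" using c by (rule homog_fin)
  have l: "lin_map scale scale (A (p + a) (q + b)) (A (p + a) (q + b + 1)) (d 0 (p + a) (q + b))"
    using mc_d0_lin[OF mc] .
  have inA: "\<And>w. w \<in> supp c \<Longrightarrow> scale (c w) (act d w p q m) \<in> A (p + a) (q + b)"
    using act_in[OF dl m] homog_deg[OF c] by (metis A_scale fst_conv snd_conv)
  have "d 0 (p + a) (q + b) (T d c p q m) = (\<Sum>w\<in>supp c. d 0 (p + a) (q + b) (scale (c w) (act d w p q m)))"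
    unfolding Tm_def supp_def[symmetric] by (rule lin_sum[OF l inA])
  also have "\<dots> = (\<Sum>w\<in>supp c. scale (c w) (T d (delta_word w) p q m)
        + scale (if even b then 1 else -1) (scale (c w) (act d w p (q + 1) (d 0 p q m))))"
  proof (rule sum.cong[OF refl])
    fix w assume w: "w \<in> supp c"
    have dw: "wdeg w = (a, b)" using homog_deg[OF c w] .
    have "d 0 (p + a) (q + b) (scale (c w) (act d w p q m)) = scale (c w) (d 0 (p + a) (q + b) (act d w p q m))"
      using lin_scale[OF l] act_in[OF dl m, of w] dw by simp
    also have "\<dots> = scale (c w) (T d (delta_word w) p q m + scale (if even b then 1 else -1) (act d w p (q + 1) (d 0 p q m)))"
      using dcomp_word[OF mc m homog_letters[OF c w]] dw by simp
    finally show "d 0 (p + a) (q + b) (scale (c w) (act d w p q m)) = scale (c w) (T d (delta_word w) p q m)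
        + scale (if even b then 1 else -1) (scale (c w) (act d w p (q + 1) (d 0 p q m)))"
      by (simp add: scale_right_distrib mult.commute)
  qed
  also have "\<dots> = T d (delta0 c) p q m + scale (if even b then 1 else -1) (T d c p (q + 1) (d 0 p q m))"
  proof -
    have "T d (delta0 c) p q m = (\<Sum>w\<in>supp c. T d (\<lambda>v. c w * delta_word w v) p q m)"
      unfolding delta0_eq by (rule T_sum[OF fc]) (use delta_word_props finite_supp_smul in blast)
    also have "\<dots> = (\<Sum>w\<in>supp c. scale (c w) (T d (delta_word w) p q m))"
      by (rule sum.cong[OF refl]) (use delta_word_props T_smul in blast)
    finally show ?thesis
      by (simp add: sum.distrib scale_sum_right Tm_def supp_def)
  qed
  finally show ?thesis .
qed

lemma exist_module:
  assumes mc: "multicomplex n scale A d"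
  shows "Cn_module n scale A (d 0) (\<lambda>p q c. T d c p q)"
proof -
  have dl: "dlin d" using mc by (rule mc_dlin)
  have vb: "vbicomplex scale A (d 0)"
    unfolding vbicomplex_def
  proof (intro conjI allI ballI)
    show "bigraded_module scale A" by (rule bgm)
  next
    fix p q show "lin_map scale scale (A p q) (A p (q + 1)) (d 0 p q)" by (rule mc_d0_lin[OF mc])
  next
    fix p q m assume "m \<in> A p q"
    from mc_rel[OF mc this, of 0] show "d 0 p (q + 1) (d 0 p q m) = 0" by simp
  qed
  show ?thesis
    unfolding Cn_module_def
  proof (intro conjI allI impI ballI)
    show "vbicomplex scale A (d 0)" by (rule vb)
  next
    fix a b p q c assume "homog (a, b) (c :: 'r fa)"
    then show "lin_map scale scale (A p q) (A (p + a) (q + b)) (T d c p q)"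
      using T_lin[OF dl] homog_deg by blast
  next
    fix a b p q c c' m assume "homog (a, b) (c :: 'r fa)" "homog (a, b) (c' :: 'r fa)" "m \<in> A p q"
    then show "T d (\<lambda>w. c w + c' w) p q m = T d c p q m + T d c' p q m"
      using T_add homog_fin by blast
  next
    fix a b p q c r m assume "homog (a, b) (c :: 'r fa)" "m \<in> A p q"
    then show "T d (\<lambda>w. r * c w) p q m = scale r (T d c p q m)"
      using T_smul homog_fin by blast
  next
    fix p q m assume "m \<in> A p q"
    then show "T d fa_one p q m = m" by (simp add: fa_one_word T_word)
  next
    fix a b a' b' p q c c' m assume h: "homog (a, b) (c :: 'r fa)" "homog (a', b') (c' :: 'r fa)" "m \<in> A p q"
    show "T d (fa_mult c c') p q m = T d c (p + a') (q + b') (T d c' p q m)"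
      by (rule T_mult[OF dl homog_fin[OF h(1)] homog_fin[OF h(2)] homog_deg[OF h(2)] h(3)])
  next
    fix a b p q c m assume h: "homog (a, b) (c :: 'r fa)" "c \<in> In_ideal n" "m \<in> A p q"
    have "(\<lambda>w. if wdeg w = (a, b) then c w else 0) = c"
      using h(1) by (auto simp: homog_def intro!: ext)
    then show "T d c p q m = 0" using ideal_vanish[OF mc h(2)] h(3) by metis
  next
    fix a b p q c m assume h: "homog (a, b) (c :: 'r fa)" "m \<in> A p q"
    show "d 0 (p + a) (q + b) (T d c p q m) = T d (delta0 c) p q m + scale (if even b then 1 else -1) (T d c p (q + 1) (d 0 p q m))"
      by (rule dcomp_T[OF mc h(2) h(1)])
  qed
qed


lemma homog_gen: "1 \<le> i \<Longrightarrow> homog (- int i, 1 - int i) (gen i)"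
  by (auto simp: homog_def fa_elem_def gen_def word_apply wdeg_def)

lemma homog_word: "\<forall>i\<in>set w. 1 \<le> i \<Longrightarrow> homog (wdeg w) (word w)"
  by (auto simp: homog_def fa_elem_def word_apply)

lemma homog_zero: "homog ab (\<lambda>_. 0)"
  by (simp add: homog_def fa_elem_def)

lemma homog_Sk: "homog (- int k, 2 - int k) (Sk k :: 'r fa)"
proof -
  have "\<forall>i\<in>set w. 1 \<le> i" if "Sk k w \<noteq> (0::'r)" for w
  proof -
    have "w \<in> supp (Sk k :: 'r fa)" using that by (simp add: supp_def)
    then have "w \<in> (\<Union>i\<in>{1..<k}. supp (\<lambda>w. (-1::'r) ^ (i + 1) * word [i, k - i] w))"
      unfolding Sk_eq
      by (rule subsetD[OF supp_sum_sub[of "\<lambda>i w. (-1::'r) ^ (i + 1) * word [i, k - i] w" "{1..<k}"]])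
    then obtain i where "i \<in> {1..<k}" "w \<in> supp (\<lambda>w. (-1::'r) ^ (i + 1) * word [i, k - i] w)" by (rule UN_E)
    then show ?thesis by (auto simp: supp_def word_apply split: if_splits)
  qed
  moreover have "finite (supp (Sk k :: 'r fa))" by (rule finite_supp_Sk)
  moreover have "wdeg w = (- int k, 2 - int k)" if "Sk k w \<noteq> (0::'r)" for w
    using that supp_Sk[of w k] by (simp add: supp_def)
  ultimately show ?thesis
    by (auto simp: homog_def fa_elem_def supp_def)
qed

lemma delta0_gen: "delta0 (gen l) = Sk l"
proof -
  have "delta0 (gen l) = (\<lambda>v. 1 * delta_word [l] v)"
    unfolding delta0_eq supp_gen by (simp add: gen_def word_apply)
  also have "\<dots> = Sk l"
    by (simp add: fa_one_word[symmetric] fa_mult_one_right fa_mult_zero_right)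
  finally show ?thesis .
qed

context
  fixes n d0 lam
  assumes cm: "Cn_module n scale A d0 lam"
begin

lemma cm_vb: "vbicomplex scale A d0" using cm by (simp add: Cn_module_def)

lemma cm_lin: "homog (a, b) c \<Longrightarrow> lin_map scale scale (A p q) (A (p + a) (q + b)) (lam p q c)"
  using cm by (simp add: Cn_module_def)
lemma cm_add: "homog (a, b) c \<Longrightarrow> homog (a, b) c' \<Longrightarrow> m \<in> A p q \<Longrightarrow> lam p q (\<lambda>w. c w + c' w) m = lam p q c m + lam p q c' m"
  using cm by (simp add: Cn_module_def)
lemma cm_smul: "homog (a, b) c \<Longrightarrow> m \<in> A p q \<Longrightarrow> lam p q (\<lambda>w. r * c w) m = scale r (lam p q c m)"
proof -
  assume "homog (a, b) c" "m \<in> A p q"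
  moreover have "\<forall>a b p q c r. homog (a, b) c \<longrightarrow>
        (\<forall>m\<in>A p q. lam p q (\<lambda>w. r * c w) m = scale r (lam p q c m))"
    using cm by (simp add: Cn_module_def)
  ultimately show ?thesis by blast
qed
lemma cm_one: "m \<in> A p q \<Longrightarrow> lam p q fa_one m = m"
  using cm by (simp add: Cn_module_def)
lemma cm_mult: "homog (a, b) c \<Longrightarrow> homog (a', b') c' \<Longrightarrow> m \<in> A p q \<Longrightarrow>
   lam p q (fa_mult c c') m = lam (p + a') (q + b') c (lam p q c' m)"
proof -
  assume h: "homog (a, b) c" "homog (a', b') c'" "m \<in> A p q"
  have H: "\<forall>a b a' b' p q c c'. homog (a, b) c \<longrightarrow> homog (a', b') c' \<longrightarrow>
        (\<forall>m\<in>A p q. lam p q (fa_mult c c') m = lam (p + a') (q + b') c (lam p q c' m))"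
    using cm by (simp add: Cn_module_def)
  show ?thesis by (rule H[rule_format, OF h])
qed
lemma cm_ideal: "homog (a, b) c \<Longrightarrow> c \<in> In_ideal n \<Longrightarrow> m \<in> A p q \<Longrightarrow> lam p q c m = 0"
proof -
  assume h: "homog (a, b) c" "c \<in> In_ideal n" "m \<in> A p q"
  have H: "\<forall>a b p q c. homog (a, b) c \<longrightarrow> c \<in> In_ideal n \<longrightarrow> (\<forall>m\<in>A p q. lam p q c m = 0)"
    using cm by (simp add: Cn_module_def)
  show ?thesis by (rule H[rule_format, OF h])
qed
lemma cm_d0: "homog (a, b) c \<Longrightarrow> m \<in> A p q \<Longrightarrow> d0 (p + a) (q + b) (lam p q c m)
           = lam p q (delta0 c) m + scale (if even b then 1 else -1) (lam p (q + 1) c (d0 p q m))"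
proof -
  assume h: "homog (a, b) c" "m \<in> A p q"
  have H: "\<forall>a b p q c. homog (a, b) c \<longrightarrow>
        (\<forall>m\<in>A p q. d0 (p + a) (q + b) (lam p q c m)
           = lam p q (delta0 c) m + scale (if even b then 1 else -1) (lam p (q + 1) c (d0 p q m)))"
    using cm by (simp add: Cn_module_def)
  show ?thesis by (rule H[rule_format, OF h])
qed

lemma cm_dlin: "dlin (assoc_d d0 lam)"
  unfolding dlin_def
proof (intro allI)
  fix i p q
  show "lin_map scale scale (A p q) (A (p - int i) (q + 1 - int i)) (assoc_d d0 lam i p q)"
  proof (cases "i = 0")
    case True
    then show ?thesis using cm_vb by (simp add: vbicomplex_def assoc_d_def)
  next
    case False
    then have i: "1 \<le> i" by simp
    have "lin_map scale scale (A p q) (A (p + - int i) (q + (1 - int i))) (lam p q (gen i))"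
      by (rule cm_lin[OF homog_gen[OF i]])
    then show ?thesis using False by (simp add: assoc_d_def algebra_simps)
  qed
qed

lemma cm_zero: "m \<in> A p q \<Longrightarrow> lam p q (\<lambda>_. 0) m = 0"
proof -
  assume m: "m \<in> A p q"
  have "lam p q (\<lambda>w. (\<lambda>_. 0) w + (\<lambda>_. 0) w) m = lam p q (\<lambda>_. 0) m + lam p q (\<lambda>_. 0) m"
    by (rule cm_add[OF homog_zero homog_zero m])
  then show ?thesis by simp
qed

lemma cm_word: "\<forall>i\<in>set w. 1 \<le> i \<Longrightarrow> m \<in> A p q \<Longrightarrow> lam p q (word w) m = act (assoc_d d0 lam) w p q m"
proof (induction w)
  case Nil
  then show ?case using cm_one by (simp add: fa_one_word)
next
  case (Cons i w)
  have i: "1 \<le> i" using Cons by simp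
  have "lam p q (word (i # w)) m = lam (p + fst (wdeg w)) (q + snd (wdeg w)) (gen i) (lam p q (word w) m)"
    unfolding word_cons using cm_mult[OF homog_gen[OF i], of "fst (wdeg w)" "snd (wdeg w)" "word w" m p q]
      homog_word[of w] Cons.prems by simp
  then show ?case using Cons i by (simp add: assoc_d_def)
qed

lemma cm_T: "homog (a, b) c \<Longrightarrow> m \<in> A p q \<Longrightarrow> lam p q c m = T (assoc_d d0 lam) c p q m"
proof -
  assume c: "homog (a, b) c" and m: "m \<in> A p q"
  have fc: "finite (supp c)" using c by (rule homog_fin)
  have hS: "homog (a, b) (\<lambda>v. \<Sum>w\<in>S. c w * word w v)" if "S \<subseteq> supp c" for S
  proof -
    have sub: "supp (\<lambda>v. \<Sum>w\<in>S. c w * word w v) \<subseteq> S"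
      by (auto simp: supp_def word_apply intro: sum.neutral)
    have fS: "finite S" using that fc finite_subset by blast
    show ?thesis
      unfolding homog_def fa_elem_def
      using sub that fS homog_deg[OF c] homog_letters[OF c] finite_subset[OF sub fS]
      by (auto simp: supp_def)
  qed
  have "S \<subseteq> supp c \<Longrightarrow> lam p q (\<lambda>v. \<Sum>w\<in>S. c w * word w v) m = (\<Sum>w\<in>S. scale (c w) (act (assoc_d d0 lam) w p q m))" for S
  proof (induction S rule: infinite_finite_induct)
    case (infinite S)
    then show ?case using fc finite_subset by blast
  next
    case empty
    then show ?case using cm_zero[OF m] by simp
  next
    case (insert x S)
    have xs: "x \<in> supp c" using insert by simp
    have hx: "homog (a, b) (\<lambda>v. c x * word x v)"
      using hS[of "{x}"] xs by simp
    have "lam p q (\<lambda>v. \<Sum>w\<in>insert x S. c w * word w v) m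
        = lam p q (\<lambda>v. c x * word x v + (\<Sum>w\<in>S. c w * word w v)) m"
      using insert by simp
    also have "\<dots> = lam p q (\<lambda>v. c x * word x v) m + lam p q (\<lambda>v. \<Sum>w\<in>S. c w * word w v) m"
      by (rule cm_add[OF hx hS m]) (use insert in auto)
    also have "lam p q (\<lambda>v. c x * word x v) m = scale (c x) (act (assoc_d d0 lam) x p q m)"
    proof -
      have hw: "homog (a, b) (word x)" using homog_word[OF homog_letters[OF c xs]] homog_deg[OF c xs] by simp
      show ?thesis using cm_smul[OF hw m] cm_word[OF homog_letters[OF c xs] m] by simp
    qed
    finally show ?case using insert by simp
  qed
  from this[of "supp c"]
  have "lam p q (\<lambda>v. \<Sum>w\<in>supp c. c w * word w v) m = T (assoc_d d0 lam) c p q m"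
    by (simp add: Tm_def supp_def)
  moreover have "(\<lambda>v. \<Sum>w\<in>supp c. c w * word w v) = c"
  proof
    fix v
    show "(\<Sum>w\<in>supp c. c w * word w v) = c v"
      using fc by (cases "v \<in> supp c") (auto simp: word_apply supp_def if_distrib sum.delta cong: if_cong)
  qed
  ultimately show ?thesis by simp
qed

lemma cm_multicomplex:
  assumes n: "1 \<le> n"
  shows "multicomplex n scale A (assoc_d d0 lam)"
proof -
  let ?D = "assoc_d d0 lam"
  have dl: "dlin ?D" by (rule cm_dlin)
  have rel: "(\<Sum>j\<le>l. scale ((-1) ^ (l - j)) (?D (l - j) (p - int j) (q + 1 - int j) (?D j p q m))) = 0"
    if m: "m \<in> A p q" for l p q m
  proof (cases "l = 0")
    case True
    then show ?thesis using cm_vb m by (simp add: vbicomplex_def assoc_d_def)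
  next
    case False
    then have l: "1 \<le> l" by simp
    have e: "d0 (p + - int l) (q + (1 - int l)) (lam p q (gen l) m)
        = lam p q (Sk l) m + scale (if even (1 - int l) then 1 else -1) (lam p (q + 1) (gen l) (d0 p q m))"
      using cm_d0[OF homog_gen[OF l] m] by (simp add: delta0_gen)
    have sg: "(if even (1 - int l) then 1 else -1 :: 'r) = - ((-1) ^ l)"
      using sg_step[of 0 l] by simp
    have TS: "lam p q (Sk l) m = T ?D (Sk l) p q m" by (rule cm_T[OF homog_Sk m])
    show ?thesis
      unfolding rel_eq[OF dl l m] using e sg TS False by (simp add: assoc_d_def algebra_simps)
  qed
  have van: "?D i p q m = 0" if "n \<le> enat i" "m \<in> A p q" for i p q m
  proof -
    have i: "1 \<le> i" using n that(1) by (metis enat_ord_simps(1) one_enat_def order_trans)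
    have "gen i \<in> In_ideal n" by (rule In_ideal.gen_d[OF i that(1)])
    then show ?thesis using cm_ideal[OF homog_gen[OF i] _ that(2)] i by (simp add: assoc_d_def)
  qed
  show ?thesis
    unfolding multicomplex_def
    using bgm dl rel van by (simp add: dlin_def)
qed

end

lemma act_cong:
  assumes "dlin D" "\<And>i P Q x. x \<in> A P Q \<Longrightarrow> D i P Q x = D' i P Q x" "m \<in> A p q"
  shows "act D w p q m = act D' w p q m"
proof (induction w)
  case Nil then show ?case by simp
next
  case (Cons i w)
  then show ?case using assms act_in[OF assms(1) assms(3), of w] by simp
qed


lemma act_morph:
  assumes dl: "dlin D"
    and H: "\<And>i p q m. m \<in> A p q \<Longrightarrow> f (p - int i) (q + 1 - int i) (D i p q m) = E i p q (f p q m)"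
    and m: "m \<in> A p q"
  shows "f (p + fst (wdeg w)) (q + snd (wdeg w)) (act D w p q m) = act E w p q (f p q m)"
proof (induction w)
  case Nil
  then show ?case by simp
next
  case (Cons i w)
  have x: "act D w p q m \<in> A (p + fst (wdeg w)) (q + snd (wdeg w))" using act_in[OF dl m] .
  have "f (p + fst (wdeg (i # w))) (q + snd (wdeg (i # w))) (act D (i # w) p q m)
      = f (p + fst (wdeg w) - int i) (q + snd (wdeg w) + 1 - int i) (D i (p + fst (wdeg w)) (q + snd (wdeg w)) (act D w p q m))"
    by (simp add: wdeg_cons algebra_simps)
  also have "\<dots> = E i (p + fst (wdeg w)) (q + snd (wdeg w)) (f (p + fst (wdeg w)) (q + snd (wdeg w)) (act D w p q m))"
    by (rule H[OF x])
  finally show ?case using Cons by simp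
qed

lemma T_morph:
  assumes dl: "dlin D"
    and H: "\<And>i p q m. m \<in> A p q \<Longrightarrow> f (p - int i) (q + 1 - int i) (D i p q m) = E i p q (f p q m)"
    and lf: "\<And>p q. lin_map scale sc (A p q) (B p q) (f p q)"
    and c: "homog (a, b) c" and m: "m \<in> A p q"
  shows "f (p + a) (q + b) (T D c p q m) = Tm sc E c p q (f p q m)"
proof -
  have inA: "\<And>w. w \<in> supp c \<Longrightarrow> scale (c w) (act D w p q m) \<in> A (p + a) (q + b)"
    using act_in[OF dl m] homog_deg[OF c] by (metis A_scale fst_conv snd_conv)
  have "f (p + a) (q + b) (T D c p q m) = (\<Sum>w\<in>supp c. f (p + a) (q + b) (scale (c w) (act D w p q m)))"
    unfolding Tm_def supp_def[symmetric] by (rule lin_sum[OF lf inA])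
  also have "\<dots> = (\<Sum>w\<in>supp c. sc (c w) (act E w p q (f p q m)))"
  proof (rule sum.cong[OF refl])
    fix w assume w: "w \<in> supp c"
    have dw: "wdeg w = (a, b)" using homog_deg[OF c w] .
    have "f (p + a) (q + b) (scale (c w) (act D w p q m)) = sc (c w) (f (p + a) (q + b) (act D w p q m))"
      using lin_scale[OF lf] act_in[OF dl m, of w] dw by simp
    also have "\<dots> = sc (c w) (act E w p q (f p q m))"
      using act_morph[where f=f and E=E and D=D and w=w, OF dl H m] dw by simp
    finally show "f (p + a) (q + b) (scale (c w) (act D w p q m)) = sc (c w) (act E w p q (f p q m))" .
  qed
  also have "\<dots> = Tm sc E c p q (f p q m)" by (simp add: Tm_def supp_def)
  finally show ?thesis .
qed

end

lemma cm_bg: "Cn_module n scale A d0 lam \<Longrightarrow> bg scale A"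
  by (simp add: Cn_module_def vbicomplex_def bg_def)
lemma mc_bg: "multicomplex n scale A d \<Longrightarrow> bg scale A"
  by (simp add: multicomplex_def bg_def)


theorem mainTheorem12:
  fixes n :: enat
    and scale :: "'r::comm_ring_1 \<Rightarrow> 'm::ab_group_add \<Rightarrow> 'm"
    and A :: "int \<Rightarrow> int \<Rightarrow> 'm set"
    and scale' :: "'r \<Rightarrow> 'n::ab_group_add \<Rightarrow> 'n"
    and B :: "int \<Rightarrow> int \<Rightarrow> 'n set"
  assumes "1 \<le> n"
  shows
    \<comment> \<open>modules give n-multicomplexes\<close>
    "(\<forall>d0 lam. Cn_module n scale A d0 lam \<longrightarrow> multicomplex n scale A (assoc_d d0 lam))
   \<and> \<comment> \<open>every n-multicomplex arises from a module structure\<close>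
     (\<forall>d. multicomplex n scale A d \<longrightarrow>
        (\<exists>lam. Cn_module n scale A (d 0) lam \<and>
           (\<forall>i p q. 1 \<le> i \<longrightarrow> (\<forall>m\<in>A p q. lam p q (gen i) m = d i p q m))))
   \<and> \<comment> \<open>and the module structure is determined by the multicomplex\<close>
     (\<forall>d0 lam lam'. Cn_module n scale A d0 lam \<longrightarrow> Cn_module n scale A d0 lam' \<longrightarrow>
        (\<forall>i p q. 1 \<le> i \<longrightarrow> (\<forall>m\<in>A p q. lam p q (gen i) m = lam' p q (gen i) m)) \<longrightarrow>
        (\<forall>a b p q c. homog (a, b) c \<longrightarrow> (\<forall>m\<in>A p q. lam p q c m = lam' p q c m)))
   \<and> \<comment> \<open>module morphisms are exactly the multicomplex morphisms\<close>
     (\<forall>d0 lam e0 mu f. Cn_module n scale A d0 lam \<longrightarrow> Cn_module n scale' B e0 mu \<longrightarrow>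
        (Cn_module_morphism scale scale' A B d0 e0 lam mu f \<longleftrightarrow>
         multicomplex_morphism scale scale' A B (assoc_d d0 lam) (assoc_d e0 mu) f))"
proof (intro conjI allI impI)
  fix d0 lam assume cm: "Cn_module n scale A d0 lam"
  show "multicomplex n scale A (assoc_d d0 lam)"
    by (rule bg.cm_multicomplex[OF cm_bg[OF cm] cm assms])
next
  fix d assume mc: "multicomplex n scale A d"
  interpret bg scale A by (rule mc_bg[OF mc])
  show "\<exists>lam. Cn_module n scale A (d 0) lam \<and>
           (\<forall>i p q. 1 \<le> i \<longrightarrow> (\<forall>m\<in>A p q. lam p q (gen i) m = d i p q m))"
  proof (intro exI conjI allI impI ballI)
    show "Cn_module n scale A (d 0) (\<lambda>p q c. T d c p q)" by (rule exist_module[OF mc])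
  next
    fix i p q m
    show "T d (gen i) p q m = d i p q m" by (simp add: gen_def T_word)
  qed
next
  fix d0 lam lam' a b p q c
  assume cm: "Cn_module n scale A d0 lam" and cm': "Cn_module n scale A d0 lam'"
    and g: "\<forall>i p q. 1 \<le> i \<longrightarrow> (\<forall>m\<in>A p q. lam p q (gen i) m = lam' p q (gen i) m)"
    and c: "homog (a, b) (c :: 'r fa)"
  show "\<forall>m\<in>A p q. lam p q c m = lam' p q c m"
  proof
    fix m assume m: "m \<in> A p q"
    interpret bg scale A by (rule cm_bg[OF cm])
    have e1: "lam p q c m = T (assoc_d d0 lam) c p q m" by (rule cm_T[OF cm c m])
    have e2: "lam' p q c m = T (assoc_d d0 lam') c p q m" by (rule cm_T[OF cm' c m])
    have "act (assoc_d d0 lam) w p q m = act (assoc_d d0 lam') w p q m" for w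
    proof (rule act_cong[OF cm_dlin[OF cm] _ m])
      fix i P Q x assume "x \<in> A P Q"
      then show "assoc_d d0 lam i P Q x = assoc_d d0 lam' i P Q x"
        using g by (cases "i = 0") (simp_all add: assoc_d_def)
    qed
    then show "lam p q c m = lam' p q c m" unfolding e1 e2 Tm_def by simp
  qed
next
  fix d0 lam e0 mu f
  assume cm: "Cn_module n scale A d0 lam" and cmB: "Cn_module n scale' B e0 mu"
  interpret bg scale A by (rule cm_bg[OF cm])
  interpret B: bg scale' B by (rule cm_bg[OF cmB])
  show "Cn_module_morphism scale scale' A B d0 e0 lam mu f \<longleftrightarrow>
         multicomplex_morphism scale scale' A B (assoc_d d0 lam) (assoc_d e0 mu) f"
  proof
    assume mo: "Cn_module_morphism scale scale' A B d0 e0 lam mu f"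
    show "multicomplex_morphism scale scale' A B (assoc_d d0 lam) (assoc_d e0 mu) f"
      unfolding multicomplex_morphism_def
    proof (intro conjI allI ballI)
      fix p q show "lin_map scale scale' (A p q) (B p q) (f p q)" using mo by (simp add: Cn_module_morphism_def)
    next
      fix i p q m assume m: "m \<in> A p q"
      show "f (p - int i) (q + 1 - int i) (assoc_d d0 lam i p q m) = assoc_d e0 mu i p q (f p q m)"
      proof (cases "i = 0")
        case True
        then show ?thesis using mo m by (simp add: Cn_module_morphism_def assoc_d_def)
      next
        case False
        then have i: "1 \<le> i" by simp
        have H: "\<forall>a b p q c. homog (a, b) c \<longrightarrow>
          (\<forall>m\<in>A p q. f (p + a) (q + b) (lam p q c m) = mu p q c (f p q m))"
          using mo by (simp add: Cn_module_morphism_def)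
        have "f (p + - int i) (q + (1 - int i)) (lam p q (gen i) m) = mu p q (gen i) (f p q m)"
          by (rule H[rule_format, OF homog_gen[OF i] m])
        then show ?thesis using False by (simp add: assoc_d_def algebra_simps)
      qed
    qed
  next
    assume mo: "multicomplex_morphism scale scale' A B (assoc_d d0 lam) (assoc_d e0 mu) f"
    have lf: "\<And>p q. lin_map scale scale' (A p q) (B p q) (f p q)" using mo by (simp add: multicomplex_morphism_def)
    have H: "\<And>i p q m. m \<in> A p q \<Longrightarrow> f (p - int i) (q + 1 - int i) (assoc_d d0 lam i p q m) = assoc_d e0 mu i p q (f p q m)"
      using mo by (simp add: multicomplex_morphism_def)
    show "Cn_module_morphism scale scale' A B d0 e0 lam mu f"
      unfolding Cn_module_morphism_def
    proof (intro conjI allI impI ballI)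
      fix p q show "lin_map scale scale' (A p q) (B p q) (f p q)" by (rule lf)
    next
      fix p q m assume m: "m \<in> A p q"
      show "f p (q + 1) (d0 p q m) = e0 p q (f p q m)" using H[OF m, of 0] by (simp add: assoc_d_def)
    next
      fix a b p q c m assume c: "homog (a, b) (c :: 'r fa)" and m: "m \<in> A p q"
      have fm: "f p q m \<in> B p q" using lin_in[OF lf m] .
      have "f (p + a) (q + b) (lam p q c m) = f (p + a) (q + b) (T (assoc_d d0 lam) c p q m)"
        by (simp add: cm_T[OF cm c m])
      also have "\<dots> = Tm scale' (assoc_d e0 mu) c p q (f p q m)"
        by (rule T_morph[OF cm_dlin[OF cm] H lf c m])
      also have "\<dots> = mu p q c (f p q m)"
        by (rule B.cm_T[OF cmB c fm, symmetric])
      finally show "f (p + a) (q + b) (lam p q c m) = mu p q c (f p q m)" .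
    qed
  qed
qed

end
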